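(* Assume the seeds are i.i.d. uniform on $[n]$. If $n\ge6$ is even and $l$ is an integer with $2\le l\le n/2-1$, then $$c:=\limsup_{m\to\infty}\frac{\log\bigl(1-p_1(n,m,l)\bigr)}{m}<0$$ (with the convention $\log 0=-\infty$).
   Context: Candidates $[n]$, $m$ voters; voter $j$ has the clockwise oriented preference list $(s_j,s_j+1,\dots,n,1,\dots,s_j-1)$ with seed $s_j$; seeds are independent and uniform on $[n]$. In an election among a non-empty $S\subseteq[n]$ each voter votes for the first candidate of $S$ in its list; $\Xi_S(i)$ is the number of votes for $i$. Two-round election with partition $(A,B)$ of $[n]$: the winner of $A$ is the $a\in A$ with $\Xi_A(a)>\Xi_A(a')$ for all other $a'\in A$ (if none exists, nobody wins the election); likewise for $B$; between the two first-round winners $a,b$, $a$ wins iff $\Xi_{\{a,b\}}(a)>\Xi_{\{a,b\}}(b)$ (ties: nobody wins). For even $n$ and $2\le l<n/2$, $A^{(1,n,l)}=\{1,\dots,l\}\cup\{l+2i:1\le i\le(n-2l)/2\}$, $B^{(1,n,l)}=[n]\setminus A^{(1,n,l)}$, and $p_1(n,m,l)$ is the probability that candidate $1$ wins the two-round election with partition $(A^{(1,n,l)},B^{(1,n,l)})$. *)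

theory Defs
  imports "HOL-Analysis.Analysis" "HOL-Library.Liminf_Limsup" "HOL-Library.Extended_Real"
begin

text \<open>Candidates are 1..n. A voter with seed s has the list s, s+1, ..., n, 1, ..., s-1,
  so candidate c is at position (c + n - s) mod n (0-based).\<close>
definition pos :: "nat \<Rightarrow> nat \<Rightarrow> nat \<Rightarrow> nat" where
  "pos n s c = (c + n - s) mod n"

definition first_in :: "nat \<Rightarrow> nat set \<Rightarrow> nat \<Rightarrow> nat" where
  "first_in n S s = (THE c. c \<in> S \<and> (\<forall>c'\<in>S. pos n s c \<le> pos n s c'))"

definition votes :: "nat \<Rightarrow> nat \<Rightarrow> (nat \<Rightarrow> nat) \<Rightarrow> nat set \<Rightarrow> nat \<Rightarrow> nat" where
  "votes n m seeds S i = card {j. j < m \<and> first_in n S (seeds j) = i}"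

definition is_winner :: "nat \<Rightarrow> nat \<Rightarrow> (nat \<Rightarrow> nat) \<Rightarrow> nat set \<Rightarrow> nat \<Rightarrow> bool" where
  "is_winner n m seeds S a \<longleftrightarrow> a \<in> S \<and>
     (\<forall>a'\<in>S. a' \<noteq> a \<longrightarrow> votes n m seeds S a > votes n m seeds S a')"

definition wins_two_round :: "nat \<Rightarrow> nat \<Rightarrow> (nat \<Rightarrow> nat) \<Rightarrow> nat set \<Rightarrow> nat set \<Rightarrow> nat \<Rightarrow> bool" where
  "wins_two_round n m seeds A B c \<longleftrightarrow>
     (\<exists>a b. is_winner n m seeds A a \<and> is_winner n m seeds B b \<and>
        ((c = a \<and> votes n m seeds {a, b} a > votes n m seeds {a, b} b) \<or>
         (c = b \<and> votes n m seeds {a, b} b > votes n m seeds {a, b} a)))"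

definition A1 :: "nat \<Rightarrow> nat \<Rightarrow> nat set" where
  "A1 n l = {1..l} \<union> {l + 2 * i | i. 1 \<le> i \<and> i \<le> (n - 2 * l) div 2}"

definition B1 :: "nat \<Rightarrow> nat \<Rightarrow> nat set" where
  "B1 n l = {1..n} - A1 n l"

text \<open>Seeds i.i.d. uniform on [n]: probability = (number of favourable seed vectors) / n^m.\<close>
definition p1 :: "nat \<Rightarrow> nat \<Rightarrow> nat \<Rightarrow> real" where
  "p1 n m l = real (card {seeds \<in> {0..<m} \<rightarrow>\<^sub>E {1..n}.
                   wins_two_round n m seeds (A1 n l) (B1 n l) 1}) / real n ^ m"

definition lograte :: "nat \<Rightarrow> nat \<Rightarrow> nat \<Rightarrow> ereal" where
  "lograte n l m = (if 1 - p1 n m l = 0 then -\<infinity> else ereal (ln (1 - p1 n m l) / real m))"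

end

theory Submission imports Defs begin

lemma chernoff_gen:
  fixes S :: "nat set" and f :: "nat \<Rightarrow> int" and lam :: real
  assumes fin: "finite S" and lam: "lam \<ge> 0"
  shows "real (card {x \<in> {0..<m} \<rightarrow>\<^sub>E S. (\<Sum>j<m. f (x j)) \<le> 0}) \<le> (\<Sum>s\<in>S. exp (- lam * f s)) ^ m"
proof -
  let ?P = "{x \<in> {0..<m} \<rightarrow>\<^sub>E S. (\<Sum>j<m. f (x j)) \<le> 0}"
  let ?g = "\<lambda>x. exp (- lam * real_of_int (\<Sum>j<m. f (x j)))"
  have finP: "finite ({0..<m} \<rightarrow>\<^sub>E S)" using fin by (simp add: finite_PiE)
  have "real (card ?P) = (\<Sum>x\<in>?P. 1)" by simp
  also have "\<dots> \<le> (\<Sum>x\<in>?P. ?g x)"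
  proof (rule sum_mono)
    fix x assume "x \<in> ?P"
    then have "(\<Sum>j<m. f (x j)) \<le> 0" by simp
    then have r: "real_of_int (\<Sum>j<m. f (x j)) \<le> 0" by (simp only: of_int_le_0_iff)
    have "- lam * real_of_int (\<Sum>j<m. f (x j)) \<ge> 0"
      by (rule mult_nonpos_nonpos) (use lam r in auto)
    then show "1 \<le> ?g x" by simp
  qed
  also have "\<dots> \<le> (\<Sum>x\<in>{0..<m} \<rightarrow>\<^sub>E S. ?g x)"
    by (rule sum_mono2[OF finP]) auto
  also have "\<dots> = (\<Sum>x\<in>{0..<m} \<rightarrow>\<^sub>E S. \<Prod>j\<in>{0..<m}. exp (- lam * f (x j)))"
    by (intro sum.cong refl) (simp add: exp_sum[symmetric] sum_distrib_left lessThan_atLeast0)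
  also have "\<dots> = (\<Prod>j\<in>{0..<m}. \<Sum>s\<in>S. exp (- lam * f s))"
    by (rule prod_sum_PiE[symmetric]) (use fin in auto)
  also have "\<dots> = (\<Sum>s\<in>S. exp (- lam * f s)) ^ m" by simp
  finally show ?thesis .
qed

lemma numeric_bound:
  fixes N a c :: nat
  assumes "c < a" "a + c \<le> N"
  shows "real N + real a * (- 1 / (2 * real N)) + real c * (1 / (2 * real N - 1)) \<le> real N - 1 / (4 * real N)"
proof -
  have N: "real N \<ge> 1" using assms by simp
  have ac: "real a \<ge> real c + 1" "real c \<le> real N - 1" using assms by linarith+
  have "real a * (- 1 / (2 * real N)) + real c * (1 / (2 * real N - 1)) \<le> - 1 / (4 * real N)"
  proof -
    have p1: "2 * real N - 1 > 0" "real N > 0" using N by auto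
    have "(real a * (- 1 / (2 * real N)) + real c * (1 / (2 * real N - 1))) * (4 * real N * (2 * real N - 1))
          = - 2 * real a * (2 * real N - 1) + 4 * real N * real c"
      using p1 by (simp add: field_simps)
    also have "\<dots> \<le> - (2 * real N - 1)"
    proof -
      have "(real c + 1) * (2 * real N - 1) \<le> real a * (2 * real N - 1)"
        by (rule mult_right_mono) (use ac p1 in auto)
      then show ?thesis using ac N by (simp add: algebra_simps)
    qed
    also have "\<dots> = (- 1 / (4 * real N)) * (4 * real N * (2 * real N - 1))" using p1 by (simp add: field_simps)
    finally have "(real a * (- 1 / (2 * real N)) + real c * (1 / (2 * real N - 1))) * (4 * real N * (2 * real N - 1))
       \<le> (- 1 / (4 * real N)) * (4 * real N * (2 * real N - 1))" .
    then show ?thesis by (rule mult_right_le_imp_le) (use p1 in simp)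
  qed
  then show ?thesis by linarith
qed

lemma chernoff:
  fixes S :: "nat set" and f :: "nat \<Rightarrow> int"
  assumes fin: "finite S" and cardS: "card S = N" and N: "N \<ge> 1"
    and fv: "\<forall>s\<in>S. f s \<in> {-1,0,1}"
    and ac: "card {s\<in>S. f s = -1} < card {s\<in>S. f s = 1}"
  shows "real (card {x \<in> {0..<m} \<rightarrow>\<^sub>E S. (\<Sum>j<m. f (x j)) \<le> 0}) \<le> (real N - 1 / (4 * real N)) ^ m"
proof -
  define t :: real where "t = (2 * real N - 1) / (2 * real N)"
  define lam where "lam = - ln t"
  have Npos: "real N \<ge> 1" using N by simp
  have tpos: "t > 0" "t \<le> 1" using Npos by (auto simp: t_def field_simps)
  have lam: "lam \<ge> 0" using tpos by (simp add: lam_def)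
  have e1: "exp (- lam) = t" using tpos by (simp add: lam_def)
  have e2: "exp lam = 1 / t" using tpos by (simp add: lam_def exp_minus inverse_eq_divide)
  define a where "a = card {s\<in>S. f s = 1}"
  define c where "c = card {s\<in>S. f s = -1}"
  have pt: "exp (- lam * f s) = 1 + (if f s = 1 then t - 1 else 0) + (if f s = -1 then 1 / t - 1 else 0)"
    if "s \<in> S" for s
    using fv that e1 e2 by auto
  have "(\<Sum>s\<in>S. exp (- lam * f s)) = (\<Sum>s\<in>S. 1 + (if f s = 1 then t - 1 else 0) + (if f s = -1 then 1 / t - 1 else 0))"
    using pt by (rule sum.cong[OF refl])
  also have "\<dots> = real N + real a * (t - 1) + real c * (1 / t - 1)"
    by (simp add: sum.distrib sum.If_cases[OF fin] cardS a_def c_def Int_def conj_commute)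
  also have "t - 1 = - 1 / (2 * real N)" using Npos by (simp add: t_def field_simps)
  also have "1 / t - 1 = 1 / (2 * real N - 1)" using Npos by (simp add: t_def field_simps)
  also have "real N + real a * (- 1 / (2 * real N)) + real c * (1 / (2 * real N - 1)) \<le> real N - 1 / (4 * real N)"
  proof (rule numeric_bound)
    show "c < a" using ac by (simp add: a_def c_def)
    have "a + c = card ({s\<in>S. f s = 1} \<union> {s\<in>S. f s = -1})"
      unfolding a_def c_def by (rule card_Un_disjoint[symmetric]) (use fin in auto)
    also have "\<dots> \<le> card S" by (rule card_mono[OF fin]) auto
    finally show "a + c \<le> N" using cardS by simp
  qed
  finally have B: "(\<Sum>s\<in>S. exp (- lam * f s)) \<le> real N - 1 / (4 * real N)" .
  have "real (card {x \<in> {0..<m} \<rightarrow>\<^sub>E S. (\<Sum>j<m. f (x j)) \<le> 0}) \<le> (\<Sum>s\<in>S. exp (- lam * f s)) ^ m"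
    by (rule chernoff_gen[OF fin lam])
  also have "\<dots> \<le> (real N - 1 / (4 * real N)) ^ m"
    by (rule power_mono[OF B]) (simp add: sum_nonneg)
  finally show ?thesis .
qed

lemma pos_formula:
  assumes "1 \<le> s" "s \<le> n" "1 \<le> c" "c \<le> n"
  shows "pos n s c = (if s \<le> c then c - s else c + n - s)"
proof (cases "s \<le> c")
  case True
  then have "c + n - s = (c - s) + n" by simp
  then have "pos n s c = (c - s) mod n" by (simp add: pos_def)
  also have "\<dots> = c - s" using assms True by simp
  finally show ?thesis using True by simp
next
  case False
  then show ?thesis using assms by (simp add: pos_def)
qed

lemma first_in_eq:
  assumes S: "S \<subseteq> {1..n}" and c: "c \<in> S" and s: "s \<in> {1..n}"
    and minc: "\<forall>c'\<in>S. pos n s c \<le> pos n s c'"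
  shows "first_in n S s = c"
  unfolding first_in_def
proof (rule the_equality)
  show "c \<in> S \<and> (\<forall>c'\<in>S. pos n s c \<le> pos n s c')" using c minc by blast
next
  fix d assume d: "d \<in> S \<and> (\<forall>c'\<in>S. pos n s d \<le> pos n s c')"
  then have "pos n s d = pos n s c" using c minc by (meson le_antisym)
  moreover have "d \<in> {1..n}" "c \<in> {1..n}" using d c S by auto
  ultimately show "d = c" using s pos_formula[of s n c] pos_formula[of s n d]
    by (auto split: if_splits)
qed

lemma first_in_prop:
  assumes S: "S \<subseteq> {1..n}" "S \<noteq> {}" and s: "s \<in> {1..n}"
  shows "first_in n S s \<in> S \<and> (\<forall>c'\<in>S. pos n s (first_in n S s) \<le> pos n s c')"
proof -
  have fin: "finite S" using S finite_subset by blast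
  obtain c where c: "c \<in> S" "\<forall>c'\<in>S. pos n s c \<le> pos n s c'"
    using ex_min_if_finite[of "pos n s ` S"] fin S
    by (metis (mono_tags, lifting) arg_min_if_finite(1) arg_min_least)
  then show ?thesis using first_in_eq[OF S(1) c(1) s c(2)] by simp
qed

lemma first_in_range:
  assumes S: "S \<subseteq> {1..n}" and c: "c \<in> S" and d: "d \<in> S" "d < c"
    and s: "s \<in> {1..n}" and f: "first_in n S s = c"
  shows "d < s \<and> s \<le> c"
proof -
  have "pos n s c \<le> pos n s d" using first_in_prop[OF S(1) _ s] f d by auto
  moreover have "c \<in> {1..n}" "d \<in> {1..n}" using S c d by auto
  ultimately show ?thesis using s d pos_formula[of s n c] pos_formula[of s n d]
    by (auto split: if_splits)
qed

lemma first_in_direct: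
  assumes S: "S \<subseteq> {1..n}" and c: "c \<in> S" and s: "1 \<le> s" "s \<le> c"
    and none: "\<forall>c'\<in>S. \<not> (s \<le> c' \<and> c' < c)"
  shows "first_in n S s = c"
proof (rule first_in_eq[OF S c])
  show "s \<in> {1..n}" using s c S by auto
  show "\<forall>c'\<in>S. pos n s c \<le> pos n s c'"
  proof
    fix c' assume c': "c' \<in> S"
    have "c \<in> {1..n}" "c' \<in> {1..n}" using S c c' by auto
    then show "pos n s c \<le> pos n s c'" using s none c' pos_formula[of s n c] pos_formula[of s n c']
      by (auto split: if_splits)
  qed
qed

lemma first_in_wrap:
  assumes S: "S \<subseteq> {1..n}" and c: "c \<in> S" and s: "c < s" "s \<le> n"
    and all: "\<forall>c'\<in>S. c \<le> c' \<and> c' < s"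
  shows "first_in n S s = c"
proof (rule first_in_eq[OF S c])
  show "s \<in> {1..n}" using s c S by auto
  show "\<forall>c'\<in>S. pos n s c \<le> pos n s c'"
  proof
    fix c' assume c': "c' \<in> S"
    have "c \<in> {1..n}" "c' \<in> {1..n}" using S c c' by auto
    then show "pos n s c \<le> pos n s c'" using s all c' pos_formula[of s n c] pos_formula[of s n c']
      by (auto split: if_splits)
  qed
qed

lemma card_first_in_le:
  assumes S: "S \<subseteq> {1..n}" and c: "c \<in> S" and d: "d \<in> S" "d < c" "c \<le> d + 2"
  shows "card {s\<in>{1..n}. first_in n S s = c} \<le> 2"
proof -
  have "{s\<in>{1..n}. first_in n S s = c} \<subseteq> {d<..c}"
    using first_in_range[OF S c d(1,2)] by auto
  then have "card {s\<in>{1..n}. first_in n S s = c} \<le> card {d<..c}" by (rule card_mono[rotated]) simp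
  then show ?thesis using d by simp
qed

lemma votes_diff:
  "int (votes n m seeds S X) - int (votes n m seeds S Y) =
   (\<Sum>j<m. (if first_in n S (seeds j) = X then 1 else 0) - (if first_in n S (seeds j) = Y then 1 else 0))"
proof -
  have v: "int (votes n m seeds S Z) = (\<Sum>j<m. if first_in n S (seeds j) = Z then 1 else 0)" for Z
  proof -
    have "{j. j < m \<and> first_in n S (seeds j) = Z} = {j\<in>{..<m}. first_in n S (seeds j) = Z}" by auto
    then have "int (votes n m seeds S Z) = (\<Sum>j\<in>{j\<in>{..<m}. first_in n S (seeds j) = Z}. 1)"
      by (simp add: votes_def)
    also have "\<dots> = (\<Sum>j<m. if first_in n S (seeds j) = Z then 1 else 0)"
      by (rule sum.inter_filter) simp
    finally show ?thesis .
  qed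
  show ?thesis by (simp add: v sum_subtractf)
qed

lemma compare:
  assumes XY: "X \<noteq> Y" and n: "n \<ge> 1"
    and cnt: "card {s\<in>{1..n}. first_in n S s = Y} < card {s\<in>{1..n}. first_in n S s = X}"
  shows "real (card {seeds \<in> {0..<m} \<rightarrow>\<^sub>E {1..n}. votes n m seeds S X \<le> votes n m seeds S Y})
         \<le> (real n - 1 / (4 * real n)) ^ m"
proof -
  define f :: "nat \<Rightarrow> int" where
    "f s = (if first_in n S s = X then 1 else 0) - (if first_in n S s = Y then 1 else 0)" for s
  have eq: "{seeds \<in> {0..<m} \<rightarrow>\<^sub>E {1..n}. votes n m seeds S X \<le> votes n m seeds S Y}
      = {x \<in> {0..<m} \<rightarrow>\<^sub>E {1..n}. (\<Sum>j<m. f (x j)) \<le> 0}"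
  proof -
    have "votes n m x S X \<le> votes n m x S Y \<longleftrightarrow> (\<Sum>j<m. f (x j)) \<le> 0" for x
      using votes_diff[of n m x S X Y] unfolding f_def by linarith
    then show ?thesis by blast
  qed
  have c1: "{s\<in>{1..n}. f s = 1} = {s\<in>{1..n}. first_in n S s = X}" using XY by (auto simp: f_def)
  have c2: "{s\<in>{1..n}. f s = -1} = {s\<in>{1..n}. first_in n S s = Y}" using XY by (auto simp: f_def)
  show ?thesis unfolding eq
    by (rule chernoff) (use n cnt c1 c2 in \<open>auto simp: f_def\<close>)
qed

lemma A1_mem: "x \<in> A1 n l \<longleftrightarrow> (1 \<le> x \<and> x \<le> l) \<or> (\<exists>i. 1 \<le> i \<and> i \<le> (n - 2 * l) div 2 \<and> x = l + 2 * i)"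
  by (auto simp: A1_def)

context
  fixes n l :: nat
  assumes ev: "even n" and l2: "2 \<le> l" and nl: "2 * l + 2 \<le> n"
begin

lemma A_le: "x \<in> A1 n l \<Longrightarrow> 1 \<le> x \<and> x \<le> n - 2"
  unfolding A1_mem using nl l2 by auto

lemma A_sub: "A1 n l \<subseteq> {1..n}"
  using A_le by fastforce

lemma B_sub: "B1 n l \<subseteq> {1..n}"
  by (auto simp: B1_def)

lemma one_A: "1 \<in> A1 n l"
  using l2 by (auto simp: A1_mem)

lemma l1_B: "l + 1 \<in> B1 n l"
proof -
  have "l + 1 \<noteq> l + 2 * i" for i by presburger
  then have "l + 1 \<notin> A1 n l" unfolding A1_mem by auto
  then show ?thesis using nl by (auto simp: B1_def)
qed

lemma cntA1: "3 \<le> card {s\<in>{1..n}. first_in n (A1 n l) s = 1}"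
proof -
  have "{1, n - 1, n} \<subseteq> {s\<in>{1..n}. first_in n (A1 n l) s = 1}"
  proof -
    have "first_in n (A1 n l) 1 = 1"
      by (rule first_in_direct[OF A_sub one_A]) auto
    moreover have "first_in n (A1 n l) s = 1" if "s = n - 1 \<or> s = n" for s
      by (rule first_in_wrap[OF A_sub one_A]) (use that nl l2 in \<open>auto dest!: A_le\<close>)
    ultimately show ?thesis using nl by auto
  qed
  moreover have "card {1, n - 1, n} = 3" using nl l2 by (simp add: card_insert_if)
  ultimately show ?thesis using card_mono[of "{s\<in>{1..n}. first_in n (A1 n l) s = 1}" "{1, n - 1, n}"] by simp
qed

lemma cntA2:
  assumes a: "a \<in> A1 n l" "a \<noteq> 1"
  shows "card {s\<in>{1..n}. first_in n (A1 n l) s = a} \<le> 2"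
proof -
  obtain d where "d \<in> A1 n l" "d < a" "a \<le> d + 2"
  proof (cases "a \<le> l")
    case True
    have a1: "1 \<le> a" using A_le[OF a(1)] by blast
    have "a - 1 \<in> A1 n l" unfolding A1_mem by (rule disjI1) (use True a1 a(2) in linarith)
    then show ?thesis using that[of "a - 1"] a1 a(2) by simp
  next
    case False
    then obtain i where i: "1 \<le> i" "i \<le> (n - 2 * l) div 2" "a = l + 2 * i" using a by (auto simp: A1_mem)
    show ?thesis
    proof (cases "i = 1")
      case True
      have "l \<in> A1 n l" unfolding A1_mem using l2 by simp
      then show ?thesis using that[of l] i True by simp
    next
      case False
      have "l + 2 * (i - 1) \<in> A1 n l" unfolding A1_mem
        by (rule disjI2, rule exI[of _ "i - 1"]) (use i False in auto)
      then show ?thesis using that[of "l + 2 * (i - 1)"] i False by auto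
    qed
  qed
  then show ?thesis using card_first_in_le[OF A_sub a(1)] by blast
qed

lemma cntB1: "3 \<le> card {s\<in>{1..n}. first_in n (B1 n l) s = l + 1}"
proof -
  have "{1..l+1} \<subseteq> {s\<in>{1..n}. first_in n (B1 n l) s = l + 1}"
  proof
    fix s assume s: "s \<in> {1..l+1}"
    have "first_in n (B1 n l) s = l + 1"
    proof (rule first_in_direct[OF B_sub l1_B])
      show "1 \<le> s" "s \<le> l + 1" using s by auto
      show "\<forall>c'\<in>B1 n l. \<not> (s \<le> c' \<and> c' < l + 1)"
        using s by (auto simp: B1_def A1_mem)
    qed
    then show "s \<in> {s\<in>{1..n}. first_in n (B1 n l) s = l + 1}" using s nl by auto
  qed
  then have "card {1..l+1} \<le> card {s\<in>{1..n}. first_in n (B1 n l) s = l + 1}"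
    by (rule card_mono[rotated]) simp
  then show ?thesis using l2 by simp
qed

lemma cntB2:
  assumes b: "b \<in> B1 n l" "b \<noteq> l + 1"
  shows "card {s\<in>{1..n}. first_in n (B1 n l) s = b} \<le> 2"
proof -
  have bA: "b \<notin> A1 n l" "1 \<le> b" "b \<le> n" using b by (auto simp: B1_def)
  then have bl: "b \<ge> l + 2" using b(2) by (auto simp: A1_mem)
  obtain d where "d \<in> B1 n l" "d < b" "b \<le> d + 2"
  proof (cases "b - 1 \<in> A1 n l")
    case False
    have "b - 1 \<in> B1 n l" using False bA bl by (auto simp: B1_def)
    then show ?thesis using that[of "b - 1"] bl by auto
  next
    case True
    then obtain i where i: "b - 1 = l + 2 * i" using bl by (auto simp: A1_mem)
    have "b - 2 \<notin> A1 n l"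
    proof
      assume "b - 2 \<in> A1 n l"
      then have "b - 2 \<le> l \<or> (\<exists>j. b - 2 = l + 2 * j)" by (auto simp: A1_mem)
      then obtain j where "b - 2 = l + 2 * j"
      proof
        assume "b - 2 \<le> l" then have "b - 2 = l + 2 * 0" using bl by simp
        then show thesis using that by blast
      qed blast
      with i bl show False by presburger
    qed
    then have "b - 2 \<in> B1 n l" using bA bl l2 by (auto simp: B1_def)
    then show ?thesis using that[of "b - 2"] bl by auto
  qed
  then show ?thesis using card_first_in_le[OF B_sub b(1)] by blast
qed

lemma C_sub: "{1, l + 1} \<subseteq> {1..n}" using nl by auto

lemma cntC1: "l < card {s\<in>{1..n}. first_in n {1, l + 1} s = 1}"
proof -
  have "{l+2..n} \<subseteq> {s\<in>{1..n}. first_in n {1, l + 1} s = 1}"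
  proof
    fix s assume s: "s \<in> {l+2..n}"
    have "first_in n {1, l + 1} s = 1"
      by (rule first_in_wrap[OF C_sub]) (use s in auto)
    then show "s \<in> {s\<in>{1..n}. first_in n {1, l + 1} s = 1}" using s by auto
  qed
  then have "card {l+2..n} \<le> card {s\<in>{1..n}. first_in n {1, l + 1} s = 1}"
    by (rule card_mono[rotated]) simp
  then show ?thesis using nl by simp
qed

lemma cntC2: "card {s\<in>{1..n}. first_in n {1, l + 1} s = l + 1} \<le> l"
proof -
  have "{s\<in>{1..n}. first_in n {1, l + 1} s = l + 1} \<subseteq> {1<..l+1}"
    using first_in_range[OF C_sub, of "l+1" 1] l2 by auto
  then have "card {s\<in>{1..n}. first_in n {1, l + 1} s = l + 1} \<le> card {1<..l+1}"
    by (rule card_mono[rotated]) simp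
  then show ?thesis by simp
qed

end


lemma card_Un3_le: "card (X \<union> Y \<union> Z) \<le> card X + card Y + card Z"
  using card_Un_le[of X Y] card_Un_le[of "X \<union> Y" Z] by linarith

lemma fail_bound:
  assumes ev: "even n" and l2: "2 \<le> l" and nl: "2 * l + 2 \<le> n"
  shows "1 - p1 n m l \<le> (2 * real n + 1) * ((real n - 1 / (4 * real n)) / real n) ^ m \<and> p1 n m l \<le> 1"
proof -
  define P where "P = {0..<m} \<rightarrow>\<^sub>E {1..n}"
  define W where "W = {seeds \<in> P. wins_two_round n m seeds (A1 n l) (B1 n l) 1}"
  define E where "E S X Y = {seeds \<in> P. votes n m seeds S X \<le> votes n m seeds S Y}" for S X Y
  define K where "K = (real n - 1 / (4 * real n)) ^ m"
  define A where "A = A1 n l"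
  define B where "B = B1 n l"
  have n1: "real n \<ge> 1" using nl by simp
  have K0: "K \<ge> 0" unfolding K_def
  proof (rule zero_le_power)
    have "1 / (4 * real n) \<le> 1" using n1 by simp
    then show "0 \<le> real n - 1 / (4 * real n)" using n1 by linarith
  qed
  have finP: "finite P" by (simp add: P_def finite_PiE)
  have sub: "P - W \<subseteq> (\<Union>y\<in>A-{1}. E A 1 y) \<union> (\<Union>y\<in>B-{l+1}. E B (l+1) y) \<union> E {1, l+1} 1 (l+1)"
  proof
    fix x assume x: "x \<in> P - W"
    show "x \<in> (\<Union>y\<in>A-{1}. E A 1 y) \<union> (\<Union>y\<in>B-{l+1}. E B (l+1) y) \<union> E {1, l+1} 1 (l+1)"
    proof (rule ccontr)
      assume nx: "\<not> ?thesis"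
      have xP: "x \<in> P" using x by blast
      have w1: "is_winner n m x A 1"
        unfolding is_winner_def
      proof (intro conjI ballI impI)
        show "1 \<in> A" using one_A[OF ev l2 nl] by (simp add: A_def)
        fix a' assume "a' \<in> A" "a' \<noteq> 1"
        then have "x \<notin> E A 1 a'" using nx by blast
        then show "votes n m x A a' < votes n m x A 1" using xP by (simp add: E_def)
      qed
      have w2: "is_winner n m x B (l+1)"
        unfolding is_winner_def
      proof (intro conjI ballI impI)
        show "l + 1 \<in> B" using l1_B[OF ev l2 nl] by (simp add: B_def)
        fix a' assume "a' \<in> B" "a' \<noteq> l + 1"
        then have "x \<notin> E B (l+1) a'" using nx by blast
        then show "votes n m x B a' < votes n m x B (l+1)" using xP by (simp add: E_def)
      qed
      have w3: "votes n m x {1, l+1} (l+1) < votes n m x {1, l+1} 1"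
      proof -
        have "x \<notin> E {1, l+1} 1 (l+1)" using nx by blast
        then show ?thesis using xP by (simp add: E_def)
      qed
      have "wins_two_round n m x A B 1"
        unfolding wins_two_round_def using w1 w2 w3 by blast
      then show False using x by (simp add: W_def A_def B_def)
    qed
  qed
  have cmp: "real (card (E S X Y)) \<le> K"
    if "X \<noteq> Y" "card {s\<in>{1..n}. first_in n S s = Y} < card {s\<in>{1..n}. first_in n S s = X}" for S X Y
    unfolding E_def P_def K_def by (rule compare) (use that nl in auto)
  have U: "real (card (\<Union>y\<in>T. E S X y)) \<le> real n * K"
    if T: "T \<subseteq> {1..n}" and c: "\<And>y. y \<in> T \<Longrightarrow> real (card (E S X y)) \<le> K" for T S X
  proof -
    have fT: "finite T" using T finite_subset by blast
    have "real (card (\<Union>y\<in>T. E S X y)) \<le> real (\<Sum>y\<in>T. card (E S X y))"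
      using card_UN_le[OF fT] of_nat_mono by blast
    also have "\<dots> = (\<Sum>y\<in>T. real (card (E S X y)))" by simp
    also have "\<dots> \<le> (\<Sum>y\<in>T. K)" by (rule sum_mono) (use c in auto)
    also have "\<dots> = real (card T) * K" by simp
    also have "\<dots> \<le> real n * K"
    proof (rule mult_right_mono[OF _ K0])
      have "card T \<le> card {1..n}" by (rule card_mono[OF _ T]) simp
      then show "real (card T) \<le> real n" by simp
    qed
    finally show ?thesis .
  qed
  have U1: "real (card (\<Union>y\<in>A-{1}. E A 1 y)) \<le> real n * K"
  proof (rule U)
    show "A - {1} \<subseteq> {1..n}" using A_sub[OF ev l2 nl] by (auto simp: A_def)
    fix y assume y: "y \<in> A - {1}"
    have a: "card {s\<in>{1..n}. first_in n A s = y} \<le> 2"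
      using cntA2[OF ev l2 nl, of y] y by (simp add: A_def)
    have b: "3 \<le> card {s\<in>{1..n}. first_in n A s = 1}"
      using cntA1[OF ev l2 nl] by (simp add: A_def)
    have "1 \<noteq> y" using y by blast
    then show "real (card (E A 1 y)) \<le> K"
      by (rule cmp) (use a b in linarith)
  qed
  have U2: "real (card (\<Union>y\<in>B-{l+1}. E B (l+1) y)) \<le> real n * K"
  proof (rule U)
    show "B - {l+1} \<subseteq> {1..n}" using B_sub[OF ev l2 nl] by (auto simp: B_def)
    fix y assume y: "y \<in> B - {l+1}"
    have a: "card {s\<in>{1..n}. first_in n B s = y} \<le> 2"
      using cntB2[OF ev l2 nl, of y] y by (simp add: B_def)
    have b: "3 \<le> card {s\<in>{1..n}. first_in n B s = l + 1}"
      using cntB1[OF ev l2 nl] by (simp add: B_def)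
    have "l + 1 \<noteq> y" using y by blast
    then show "real (card (E B (l+1) y)) \<le> K"
      by (rule cmp) (use a b in linarith)
  qed
  have U3: "real (card (E {1, l+1} 1 (l+1))) \<le> K"
    by (rule cmp) (use cntC1[OF ev l2 nl] cntC2[OF ev l2 nl] l2 in auto)
  have "card (P - W) \<le> card ((\<Union>y\<in>A-{1}. E A 1 y) \<union> (\<Union>y\<in>B-{l+1}. E B (l+1) y) \<union> E {1, l+1} 1 (l+1))"
  proof (rule card_mono[OF _ sub])
    have "(\<Union>y\<in>A-{1}. E A 1 y) \<union> (\<Union>y\<in>B-{l+1}. E B (l+1) y) \<union> E {1, l+1} 1 (l+1) \<subseteq> P"
      unfolding E_def by blast
    then show "finite ((\<Union>y\<in>A-{1}. E A 1 y) \<union> (\<Union>y\<in>B-{l+1}. E B (l+1) y) \<union> E {1, l+1} 1 (l+1))"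
      using finP by (rule finite_subset)
  qed
  also have "\<dots> \<le> card (\<Union>y\<in>A-{1}. E A 1 y) + card (\<Union>y\<in>B-{l+1}. E B (l+1) y) + card (E {1, l+1} 1 (l+1))"
    by (rule card_Un3_le)
  finally have "real (card (P - W)) \<le> real (card (\<Union>y\<in>A-{1}. E A 1 y)) + real (card (\<Union>y\<in>B-{l+1}. E B (l+1) y)) + real (card (E {1, l+1} 1 (l+1)))"
    by linarith
  also have "\<dots> \<le> (2 * real n + 1) * K" using U1 U2 U3 by (simp add: algebra_simps)
  finally have F: "real (card (P - W)) \<le> (2 * real n + 1) * K" .
  have cP: "card P = n ^ m" by (simp add: P_def card_PiE)
  have WP: "W \<subseteq> P" by (auto simp: W_def)
  have cW: "card W + card (P - W) = n ^ m"
  proof -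
    have "card (P - W) = card P - card W" by (rule card_Diff_subset[OF finite_subset[OF WP finP] WP])
    moreover have "card W \<le> card P" by (rule card_mono[OF finP WP])
    ultimately show ?thesis using cP by linarith
  qed
  have np: "real n ^ m > 0" using n1 by simp
  have p1eq: "p1 n m l = real (card W) / real n ^ m" unfolding p1_def W_def P_def by (rule refl)
  have "1 - p1 n m l = real (card (P - W)) / real n ^ m"
  proof -
    have "real (card W + card (P - W)) = real (n ^ m)" using cW by (rule arg_cong)
    then have "real (card W) + real (card (P - W)) = real n ^ m" by (simp only: of_nat_add of_nat_power)
    then show ?thesis using np unfolding p1eq by (simp add: field_simps)
  qed
  also have "\<dots> \<le> (2 * real n + 1) * K / real n ^ m" by (rule divide_right_mono[OF F]) (use np in simp)
  also have "\<dots> = (2 * real n + 1) * ((real n - 1 / (4 * real n)) / real n) ^ m"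
    by (simp add: K_def power_divide)
  finally have "1 - p1 n m l \<le> (2 * real n + 1) * ((real n - 1 / (4 * real n)) / real n) ^ m" .
  moreover have "p1 n m l \<le> 1"
  proof -
    have "card W \<le> n ^ m" using cW by linarith
    then have "real (card W) \<le> real (n ^ m)" by (rule of_nat_mono)
    then have "real (card W) \<le> real n ^ m" by (simp only: of_nat_power)
    then show ?thesis unfolding p1eq using np by simp
  qed
  ultimately show ?thesis by blast
qed

theorem mainTheorem6:
  fixes n l :: nat
  assumes "even n" and "n \<ge> 6" and "2 \<le> l" and "2 * l + 2 \<le> n"
  shows "limsup (\<lambda>m. lograte n l m) < 0"
proof -
  define r where "r = (real n - 1 / (4 * real n)) / real n"
  define C where "C = 2 * real n + 1"
  have n6: "real n \<ge> 6" using assms by simp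
  have r0: "0 < r" "r < 1"
  proof -
    have "6 * (6 * 4) \<le> real n * (real n * 4)" by (rule mult_mono) (use n6 in auto)
    then have "1 / (4 * real n) < real n" using n6 by (simp add: field_simps)
    then show "0 < r" using n6 unfolding r_def by simp
    have "1 / (4 * real n) > 0" using n6 by simp
    then show "r < 1" using n6 unfolding r_def by simp
  qed
  have C0: "C > 0" unfolding C_def by simp
  have bound: "lograte n l m \<le> ereal (ln C / real m + ln r)" if m: "m \<ge> 1" for m
  proof (cases "1 - p1 n m l = 0")
    case True
    then show ?thesis by (simp add: lograte_def)
  next
    case False
    have fb: "1 - p1 n m l \<le> C * r ^ m" "p1 n m l \<le> 1"
      using fail_bound[OF assms(1) assms(3) assms(4), of m] unfolding C_def r_def by auto
    then have pos: "1 - p1 n m l > 0" using False by linarith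
    have "ln (1 - p1 n m l) \<le> ln (C * r ^ m)"
      using pos fb(1) by simp
    also have "\<dots> = ln C + real m * ln r" using C0 r0 by (simp add: ln_mult ln_realpow)
    finally have "ln (1 - p1 n m l) / real m \<le> (ln C + real m * ln r) / real m"
      by (rule divide_right_mono) simp
    also have "\<dots> = ln C / real m + ln r" using m by (simp add: field_simps)
    finally show ?thesis using False by (simp add: lograte_def)
  qed
  have "limsup (\<lambda>m. lograte n l m) \<le> limsup (\<lambda>m. ereal (ln C / real m + ln r))"
    by (rule Limsup_mono) (use bound in \<open>auto simp: eventually_sequentially\<close>)
  also have "\<dots> = ereal (ln r)"
  proof (rule lim_imp_Limsup)
    show "\<not> trivial_limit sequentially" by simp
    have "(\<lambda>m. ln C / real m + ln r) \<longlonglongrightarrow> 0 + ln r"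
      by (intro tendsto_add lim_const_over_n tendsto_const)
    then show "(\<lambda>m. ereal (ln C / real m + ln r)) \<longlonglongrightarrow> ereal (ln r)"
      by (intro tendsto_ereal) simp
  qed
  also have "\<dots> < 0" using r0 by simp
  finally show ?thesis .
qed

end
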